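(* Let $S$ be the Phillips symmetric operator in $\mathfrak{H}$, let $Q:\mathfrak{N}_i\to\mathfrak{N}_{-i}$ be an arbitrary unitary mapping and let $\Gamma_0,\Gamma_1$ be the associated boundary operators. Then the characteristic function $\Theta(\cdot)$ of $S$ associated with $(\mathfrak{N}_{-i},\Gamma_0,\Gamma_1)$ is identically zero: $\Theta(\mu)=0$ for all $\mu$ with $\operatorname{Im}\mu>0$.
   Context: Phillips symmetric operator: let $U$ be a unitary operator in a Hilbert space $\mathfrak{H}$ which is a bilateral shift with a finite-dimensional wandering subspace $W_0$, i.e. the subspaces $U^nW_0$, $n\in\mathbb{Z}$, are mutually orthogonal and their orthogonal sum is $\mathfrak{H}$. Let $V=U\upharpoonright(\mathfrak{H}\ominus W_0)$ and $S=i(V+I)(V-I)^{-1}$ with $\mathcal{D}(S)=\mathcal{R}(V-I)$; $S$ is a closed densely defined simple symmetric operator with deficiency indices $\langle\dim W_0,\dim W_0\rangle$. Defect subspaces: $\mathfrak{N}_\mu=\mathfrak{H}\ominus\mathcal{R}(S-\mu I)=\ker(S^*-\overline{\mu}I)$; in particular $\mathfrak{N}_{\pm i}$. Every $\psi\in\mathcal{D}(S^* )$ decomposes uniquely as $\psi=u+f_{-i}+f_i$, $u\in\mathcal{D}(S)$, $f_{\pm i}\in\mathfrak{N}_{\pm i}$; for a unitary $Q:\mathfrak{N}_i\to\mathfrak{N}_{-i}$ set $\Gamma_0\psi=f_{-i}+Qf_i$, $\Gamma_1\psi=if_{-i}-iQf_i$. The characteristic function is the operator function on $\mathfrak{N}_{-i}$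 defined for $\operatorname{Im}\mu>0$ by $\Theta(\mu)(\Gamma_1+i\Gamma_0)f=(\Gamma_1-i\Gamma_0)f$ for all $f\in\mathfrak{N}_{\overline{\mu}}$. *)

theory Defs
  imports "HOL-Analysis.Analysis"
begin

class complex_inner = real_normed_vector +
  fixes scaleC :: "complex \<Rightarrow> 'a \<Rightarrow> 'a"
    and cinner :: "'a \<Rightarrow> 'a \<Rightarrow> complex"
  assumes scaleC_of_real: "scaleC (of_real r) x = scaleR r x"
    and scaleC_add_right: "scaleC c (x + y) = scaleC c x + scaleC c y"
    and scaleC_add_left: "scaleC (b + c) x = scaleC b x + scaleC c x"
    and scaleC_scaleC: "scaleC b (scaleC c x) = scaleC (b * c) x"
    and scaleC_one: "scaleC 1 x = x"
    and cinner_commute: "cinner x y = cnj (cinner y x)"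
    and cinner_add_right: "cinner x (y + z) = cinner x y + cinner x z"
    and cinner_scaleC_right: "cinner x (scaleC c y) = c * cinner x y"
    and cinner_self_norm: "cinner x x = complex_of_real ((norm x)\<^sup>2)"

class chilbert = complex_inner + complete_space

definition orth_compl :: "'a::complex_inner set \<Rightarrow> 'a set" where
  "orth_compl A = {x. \<forall>a\<in>A. cinner a x = 0}"

definition csubspace :: "'a::complex_inner set \<Rightarrow> bool" where
  "csubspace M \<longleftrightarrow> 0 \<in> M \<and> (\<forall>x\<in>M. \<forall>y\<in>M. x + y \<in> M) \<and> (\<forall>c. \<forall>x\<in>M. scaleC c x \<in> M)"

definition fin_dim :: "'a::complex_inner set \<Rightarrow> bool" where
  "fin_dim M \<longleftrightarrow> (\<exists>B. finite B \<and> B \<subseteq> M \<and> M \<subseteq> span B)"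

definition clinear_on :: "'a::complex_inner set \<Rightarrow> ('a \<Rightarrow> 'b::complex_inner) \<Rightarrow> bool" where
  "clinear_on M T \<longleftrightarrow> (\<forall>x\<in>M. \<forall>y\<in>M. T (x + y) = T x + T y) \<and> (\<forall>c. \<forall>x\<in>M. T (scaleC c x) = scaleC c (T x))"

definition unitary :: "('a::complex_inner \<Rightarrow> 'a) \<Rightarrow> bool" where
  "unitary U \<longleftrightarrow> clinear_on UNIV U \<and> bij U \<and> (\<forall>x y. cinner (U x) (U y) = cinner x y)"

definition unitary_between :: "('a::complex_inner \<Rightarrow> 'a) \<Rightarrow> 'a set \<Rightarrow> 'a set \<Rightarrow> bool" where
  "unitary_between Q M N \<longleftrightarrow> clinear_on M Q \<and> bij_betw Q M N \<and>
     (\<forall>x\<in>M. \<forall>y\<in>M. cinner (Q x) (Q y) = cinner x y)"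

definition Upow :: "('a \<Rightarrow> 'a) \<Rightarrow> int \<Rightarrow> 'a \<Rightarrow> 'a" where
  "Upow U n = (if 0 \<le> n then U ^^ nat n else inv U ^^ nat (- n))"

definition bilateral_shift :: "('a::chilbert \<Rightarrow> 'a) \<Rightarrow> 'a set \<Rightarrow> bool" where
  "bilateral_shift U W0 \<longleftrightarrow> unitary U \<and> csubspace W0 \<and> fin_dim W0 \<and>
     (\<forall>m n. m \<noteq> n \<longrightarrow> (\<forall>x\<in>W0. \<forall>y\<in>W0. cinner (Upow U m x) (Upow U n y) = 0)) \<and>
     closure (span (\<Union>n. Upow U n ` W0)) = UNIV"

text \<open>Phillips symmetric operator \<open>S = i(V+I)(V-I)^{-1}\<close>, \<open>V = U\<restriction>(H \<ominus> W0)\<close>,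
  \<open>D(S) = R(V - I)\<close>, given by its graph.\<close>
definition phillips_graph :: "('a::chilbert \<Rightarrow> 'a) \<Rightarrow> 'a set \<Rightarrow> ('a \<times> 'a) set" where
  "phillips_graph U W0 = {(U g - g, scaleC \<i> (U g + g)) | g. g \<in> orth_compl W0}"

definition op_dom :: "('a \<times> 'a) set \<Rightarrow> 'a set" where
  "op_dom G = fst ` G"

text \<open>Defect subspace \<open>N_\<mu> = H \<ominus> R(S - \<mu> I)\<close>.\<close>
definition defect :: "('a::complex_inner \<times> 'a) set \<Rightarrow> complex \<Rightarrow> 'a set" where
  "defect G \<mu> = orth_compl {v - scaleC \<mu> u | u v. (u, v) \<in> G}"

text \<open>The (unique) decomposition \<open>\<psi> = u + f_{-i} + f_i\<close> of \<open>\<psi> \<in> D(S^*)\<close>.\<close>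
definition decomp :: "('a::complex_inner \<times> 'a) set \<Rightarrow> 'a \<Rightarrow> 'a \<times> 'a \<times> 'a" where
  "decomp G \<psi> = (THE (u, fm, fp). u \<in> op_dom G \<and> fm \<in> defect G (- \<i>) \<and> fp \<in> defect G \<i>
                     \<and> \<psi> = u + fm + fp)"

definition Gamma0 :: "('a::complex_inner \<times> 'a) set \<Rightarrow> ('a \<Rightarrow> 'a) \<Rightarrow> 'a \<Rightarrow> 'a" where
  "Gamma0 G Q \<psi> = (case decomp G \<psi> of (u, fm, fp) \<Rightarrow> fm + Q fp)"

definition Gamma1 :: "('a::complex_inner \<times> 'a) set \<Rightarrow> ('a \<Rightarrow> 'a) \<Rightarrow> 'a \<Rightarrow> 'a" where
  "Gamma1 G Q \<psi> = (case decomp G \<psi> of (u, fm, fp) \<Rightarrow> scaleC \<i> fm - scaleC \<i> (Q fp))"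

definition char_fun :: "('a::complex_inner \<times> 'a) set \<Rightarrow> ('a \<Rightarrow> 'a) \<Rightarrow> complex \<Rightarrow> 'a \<Rightarrow> 'a" where
  "char_fun G Q \<mu> x = (SOME y. \<exists>f \<in> defect G (cnj \<mu>).
       x = Gamma1 G Q f + scaleC \<i> (Gamma0 G Q f) \<and> y = Gamma1 G Q f - scaleC \<i> (Gamma0 G Q f))"

end

theory Submission imports Defs begin

context chilbert begin
subclass banach ..
end

lemma scaleC_zero_left[simp]: "scaleC 0 x = (0::'a::complex_inner)"
  using scaleC_of_real[of 0 x] by simp
lemma scaleC_zero_right[simp]: "scaleC c (0::'a::complex_inner) = 0"
  using scaleC_add_right[of c 0 0] by simp
lemma scaleC_minus1: "scaleC (-1) x = - (x::'a::complex_inner)"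
  using scaleC_of_real[of "-1" x] by simp
lemma scaleC_minus_right: "scaleC c (- x) = - scaleC c (x::'a::complex_inner)"
proof -
  have "scaleC c (- x) = scaleC c (scaleC (-1) x)" by (simp only: scaleC_minus1)
  also have "\<dots> = scaleC (-1) (scaleC c x)" by (simp only: scaleC_scaleC mult.commute)
  finally show ?thesis by (simp only: scaleC_minus1)
qed
lemma scaleC_diff_right: "scaleC c (x - y) = scaleC c x - scaleC c (y::'a::complex_inner)"
  by (simp only: diff_conv_add_uminus scaleC_add_right scaleC_minus_right)
lemma scaleC_diff_left: "scaleC (b - c) x = scaleC b x - scaleC c (x::'a::complex_inner)"
proof -
  have "scaleC (b - c) x + scaleC c x = scaleC b x" by (simp only: scaleC_add_left[symmetric] diff_add_cancel)
  then show ?thesis by (simp only: eq_diff_eq)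
qed
lemma scaleC_scaleR: "scaleC c (scaleR r x) = scaleR r (scaleC c (x::'a::complex_inner))"
proof -
  have "scaleC c (scaleR r x) = scaleC c (scaleC (of_real r) x)" by (simp only: scaleC_of_real)
  also have "\<dots> = scaleC (of_real r) (scaleC c x)" by (simp only: scaleC_scaleC mult.commute)
  finally show ?thesis by (simp only: scaleC_of_real)
qed
lemma cinner_zero_right[simp]: "cinner x (0::'a::complex_inner) = 0"
  using cinner_add_right[of x 0 0] by simp
lemma cinner_zero_left[simp]: "cinner (0::'a::complex_inner) x = 0"
  by (subst cinner_commute) simp
lemma cinner_add_left: "cinner (x + y) z = cinner x z + cinner y (z::'a::complex_inner)"
proof -
  have "cinner (x + y) z = cnj (cinner z (x + y))" by (rule cinner_commute)
  also have "\<dots> = cnj (cinner z x) + cnj (cinner z y)" by (simp add: cinner_add_right)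
  also have "\<dots> = cinner x z + cinner y z" by (simp only: cinner_commute[of x z] cinner_commute[of y z])
  finally show ?thesis .
qed
lemma cinner_scaleC_left: "cinner (scaleC c x) y = cnj c * cinner x (y::'a::complex_inner)"
proof -
  have "cinner (scaleC c x) y = cnj (cinner y (scaleC c x))" by (rule cinner_commute)
  also have "\<dots> = cnj c * cnj (cinner y x)" by (simp add: cinner_scaleC_right)
  also have "\<dots> = cnj c * cinner x y" by (simp only: cinner_commute[of x y])
  finally show ?thesis .
qed
lemma cinner_minus_right: "cinner x (- y) = - cinner x (y::'a::complex_inner)"
proof -
  have "cinner x (- y) = cinner x (scaleC (-1) y)" by (simp only: scaleC_minus1)
  also have "\<dots> = (-1) * cinner x y" by (rule cinner_scaleC_right)
  finally show ?thesis by simp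
qed
lemma cinner_minus_left: "cinner (- x) y = - cinner x (y::'a::complex_inner)"
proof -
  have "cinner (- x) y = cnj (cinner y (- x))" by (rule cinner_commute)
  also have "\<dots> = - cnj (cinner y x)" by (simp only: cinner_minus_right complex_cnj_minus)
  also have "\<dots> = - cinner x y" by (simp only: cinner_commute[of x y])
  finally show ?thesis .
qed
lemma cinner_diff_right: "cinner x (y - z) = cinner x y - cinner x (z::'a::complex_inner)"
  by (simp only: diff_conv_add_uminus[of y z] diff_conv_add_uminus[of "cinner x y"] cinner_add_right cinner_minus_right)
lemma cinner_diff_left: "cinner (x - y) z = cinner x z - cinner y (z::'a::complex_inner)"
  by (simp only: diff_conv_add_uminus[of x y] diff_conv_add_uminus[of "cinner x z"] cinner_add_left cinner_minus_left)
lemma cinner_self_eq0: "cinner x x = 0 \<longleftrightarrow> x = (0::'a::complex_inner)"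
  by (simp add: cinner_self_norm)
lemma norm_eq_cinner: "cinner x x = cinner y y \<Longrightarrow> norm x = norm (y::'a::complex_inner)"
proof -
  assume "cinner x x = cinner y y"
  then have "(norm x)\<^sup>2 = (norm y)\<^sup>2" by (metis cinner_self_norm of_real_eq_iff)
  then show ?thesis by (simp add: power2_eq_iff_nonneg)
qed
lemma pyth_step: "cinner e e = 1 \<Longrightarrow> cinner e X = c \<Longrightarrow>
  cinner (X - scaleC c e) (X - scaleC c e) = cinner X X - c * cnj (c::complex)"
proof -
  assume ee: "cinner e e = 1" and x: "cinner e X = c"
  have x': "cinner X e = cnj c" by (metis cinner_commute x)
  show ?thesis
    by (simp only: cinner_diff_left cinner_diff_right cinner_scaleC_left cinner_scaleC_right x x' ee)
       (simp add: algebra_simps)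
qed
lemma norm_scaleC: "norm (scaleC c x) = cmod c * norm (x::'a::complex_inner)"
proof -
  have "complex_of_real ((norm (scaleC c x))\<^sup>2) = (c * cnj c) * complex_of_real ((norm x)\<^sup>2)"
    by (simp only: cinner_self_norm[symmetric] cinner_scaleC_left cinner_scaleC_right) (simp add: algebra_simps)
  also have "\<dots> = complex_of_real ((cmod c * norm x)\<^sup>2)"
    by (simp only: complex_norm_square[symmetric] of_real_mult[symmetric] power_mult_distrib)
  finally have "(norm (scaleC c x))\<^sup>2 = (cmod c * norm x)\<^sup>2" using of_real_eq_iff by blast
  then show ?thesis by (simp add: power2_eq_iff_nonneg)
qed
lemma cinner_sum_right: "cinner x (sum f A) = (\<Sum>a\<in>A. cinner x (f a::'a::complex_inner))"
  by (induction A rule: infinite_finite_induct) (auto simp: cinner_add_right)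
lemma scaleC_sum_right: "scaleC c (sum f A) = (\<Sum>a\<in>A. scaleC c (f a::'a::complex_inner))"
  by (induction A rule: infinite_finite_induct) (auto simp: scaleC_add_right)


lemma bessel_on:
  fixes e :: "nat \<Rightarrow> 'a::complex_inner"
  assumes orth: "\<And>j k. j \<noteq> k \<Longrightarrow> cinner (e j) (e k) = 0" and nrm: "\<And>k. norm (e k) = 1"
  shows "(\<Sum>k<N. (cmod (cinner (e k) f))\<^sup>2) \<le> (norm f)\<^sup>2"
proof -
  define p where "p N = (\<Sum>k<N. scaleC (cinner (e k) f) (e k))" for N
  have key: "cinner (f - p N) (f - p N) = complex_of_real ((norm f)\<^sup>2 - (\<Sum>k<N. (cmod (cinner (e k) f))\<^sup>2))" for N
  proof (induction N)
    case 0 show ?case by (simp add: p_def cinner_self_norm)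
  next
    case (Suc N)
    define c where "c = cinner (e N) f"
    have r: "(norm f)\<^sup>2 - (\<Sum>k<N. (cmod (cinner (e k) f))\<^sup>2) - (cmod c)\<^sup>2 = (norm f)\<^sup>2 - (\<Sum>k<Suc N. (cmod (cinner (e k) f))\<^sup>2)"
      by (simp add: c_def)
    have eN: "cinner (e N) (p N) = 0"
      unfolding p_def cinner_sum_right cinner_scaleC_right
      by (rule sum.neutral) (simp add: orth)
    have ee: "cinner (e N) (e N) = 1" using cinner_self_norm[of "e N"] nrm by simp
    have x: "cinner (e N) (f - p N) = c" using eN by (simp add: cinner_diff_right c_def)
    have eq: "f - p (Suc N) = (f - p N) - scaleC c (e N)" by (simp add: p_def c_def)
    have "cinner (f - p (Suc N)) (f - p (Suc N)) = cinner (f - p N) (f - p N) - c * cnj c"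
      unfolding eq by (rule pyth_step[OF ee x])
    also have "\<dots> = complex_of_real ((norm f)\<^sup>2 - (\<Sum>k<N. (cmod (cinner (e k) f))\<^sup>2)) - complex_of_real ((cmod c)\<^sup>2)"
      by (simp only: Suc.IH complex_norm_square)
    also have "\<dots> = complex_of_real ((norm f)\<^sup>2 - (\<Sum>k<N. (cmod (cinner (e k) f))\<^sup>2) - (cmod c)\<^sup>2)"
      by (rule of_real_diff[symmetric])
    also have "\<dots> = complex_of_real ((norm f)\<^sup>2 - (\<Sum>k<Suc N. (cmod (cinner (e k) f))\<^sup>2))"
      by (simp only: r)
    finally show ?case .
  qed
  have "complex_of_real ((norm (f - p N))\<^sup>2) = complex_of_real ((norm f)\<^sup>2 - (\<Sum>k<N. (cmod (cinner (e k) f))\<^sup>2))"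
    using key[of N] cinner_self_norm[of "f - p N"] by simp
  then have "(norm (f - p N))\<^sup>2 = (norm f)\<^sup>2 - (\<Sum>k<N. (cmod (cinner (e k) f))\<^sup>2)"
    using of_real_eq_iff by blast
  moreover have "0 \<le> (norm (f - p N))\<^sup>2" by simp
  ultimately show ?thesis by linarith
qed

lemma bessel_zero:
  fixes e :: "nat \<Rightarrow> 'a::complex_inner"
  assumes orth: "\<And>j k. j \<noteq> k \<Longrightarrow> cinner (e j) (e k) = 0" and nrm: "\<And>k. norm (e k) = r"
    and bnd: "\<And>k. cmod c \<le> cmod (cinner (e k) f)"
  shows "c = 0"
proof (cases "r = 0")
  case True
  then have "e 0 = 0" using nrm[of 0] by simp
  then show ?thesis using bnd[of 0] by simp
next
  case False
  then have rpos: "r > 0" using nrm[of 0] norm_ge_zero by (metis less_eq_real_def)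
  define e' where "e' k = scaleC (complex_of_real (1/r)) (e k)" for k
  have o': "cinner (e' j) (e' k) = 0" if "j \<noteq> k" for j k
    using orth[OF that] by (simp add: e'_def cinner_scaleC_left cinner_scaleC_right)
  have n': "norm (e' k) = 1" for k using rpos by (simp add: e'_def norm_scaleC nrm norm_divide)
  have cm: "cmod (cinner (e' k) f) = cmod (cinner (e k) f) / r" for k
    using rpos by (simp add: e'_def cinner_scaleC_left norm_mult norm_divide)
  define t where "t = cmod c / r"
  have tk: "t\<^sup>2 \<le> (cmod (cinner (e' k) f))\<^sup>2" for k
  proof -
    have "t \<le> cmod (cinner (e' k) f)" unfolding cm t_def
      using bnd[of k] rpos by (intro divide_right_mono) auto
    moreover have "0 \<le> t" using rpos by (simp add: t_def)
    ultimately show ?thesis by (rule power_mono)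
  qed
  have "real N * t\<^sup>2 \<le> (norm f)\<^sup>2" for N
  proof -
    have "real N * t\<^sup>2 = (\<Sum>k<N. t\<^sup>2)" by simp
    also have "\<dots> \<le> (\<Sum>k<N. (cmod (cinner (e' k) f))\<^sup>2)" by (rule sum_mono) (rule tk)
    also have "\<dots> \<le> (norm f)\<^sup>2" by (rule bessel_on[OF o' n'])
    finally show ?thesis .
  qed
  then have "t\<^sup>2 = 0"
  proof -
    assume h: "\<And>N. real N * t\<^sup>2 \<le> (norm f)\<^sup>2"
    show "t\<^sup>2 = 0"
    proof (rule ccontr)
      assume "t\<^sup>2 \<noteq> 0"
      then have tp: "t\<^sup>2 > 0" by simp
      obtain N where "(norm f)\<^sup>2 / t\<^sup>2 < real N" using reals_Archimedean2 by blast
      then have "(norm f)\<^sup>2 < real N * t\<^sup>2" using tp by (simp add: divide_less_eq)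
      with h[of N] show False by simp
    qed
  qed
  then show ?thesis using rpos by (simp add: t_def)
qed


lemma pow_inner:
  fixes T :: "'a::complex_inner \<Rightarrow> 'a"
  assumes T: "\<And>x y. cinner (T x) (T y) = cinner x (y::'a::complex_inner)"
  shows "cinner ((T^^k) x) ((T^^k) y) = cinner x y"
  by (induction k) (simp_all add: T)

lemma orth_compl_image: "x \<in> orth_compl (f ` A) \<longleftrightarrow> (\<forall>a\<in>A. cinner (f a) x = 0)"
  by (auto simp: orth_compl_def)

lemma orth_compl_diff: "x \<in> orth_compl A \<Longrightarrow> y \<in> orth_compl A \<Longrightarrow> x - y \<in> orth_compl A"
  by (simp add: orth_compl_def cinner_diff_right)

definition lamf :: "complex \<Rightarrow> complex" where "lamf \<mu> = (\<mu> - \<i>) / (2 * \<i>)"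

lemma ident: "(- \<i> - \<mu>) * A + (- \<i> + \<mu>) * B = - (2 * \<i>) * ((1 + lamf \<mu>) * A - lamf \<mu> * B)"
  by (simp add: lamf_def field_simps)

lemma cmod_mi_lt: "Im \<mu> > 0 \<Longrightarrow> cmod (\<mu> - \<i>) < cmod (\<mu> + \<i>)"
proof -
  assume h: "Im \<mu> > 0"
  have "(cmod (\<mu> - \<i>))\<^sup>2 < (cmod (\<mu> + \<i>))\<^sup>2"
    using h by (simp only: cmod_power2) (simp add: power2_eq_square algebra_simps)
  then show ?thesis by (rule power2_less_imp_less) simp
qed

lemma bl_scaleC: "bounded_linear (scaleC c :: 'a::complex_inner \<Rightarrow> 'a)"
  by (rule bounded_linear_intro[where K="cmod c"]) (auto simp: scaleC_add_right scaleC_scaleR norm_scaleC mult.commute)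

locale phil =
  fixes U :: "'a::chilbert \<Rightarrow> 'a" and W0 :: "'a set"
  assumes bs: "bilateral_shift U W0"
begin

lemma unit: "unitary U" using bs by (simp add: bilateral_shift_def)
lemma U_add: "U (x + y) = U x + U y" using unit by (simp add: unitary_def clinear_on_def)
lemma U_scaleC: "U (scaleC c x) = scaleC c (U x)" using unit by (simp add: unitary_def clinear_on_def)
lemma U_inner: "cinner (U x) (U y) = cinner x y" using unit by (simp add: unitary_def)
lemma U_bij: "bij U" using unit by (simp add: unitary_def)
lemma U_inv1: "U (inv U x) = x" using U_bij by (simp add: bij_is_surj surj_f_inv_f)
lemma U_inv2: "inv U (U x) = x" using U_bij by (simp add: bij_is_inj inv_f_f)
lemma Ui_inner: "cinner (inv U x) (inv U y) = cinner x y"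
proof -
  have "cinner (inv U x) (inv U y) = cinner (U (inv U x)) (U (inv U y))" by (simp only: U_inner)
  then show ?thesis by (simp only: U_inv1)
qed
lemma U_minus: "U (- x) = - U x"
proof -
  have "U (scaleC (-1) x) = scaleC (-1) (U x)" by (rule U_scaleC)
  then show ?thesis by (simp only: scaleC_minus1)
qed
lemma U_diff: "U (x - y) = U x - U y" by (simp only: diff_conv_add_uminus U_add U_minus)
lemma U_norm: "norm (U x) = norm x" by (rule norm_eq_cinner) (simp only: U_inner)
lemma U_bl: "bounded_linear U"
proof (rule bounded_linear_intro[where K=1])
  show "U (x + y) = U x + U y" for x y by (rule U_add)
  show "U (scaleR r x) = scaleR r (U x)" for r x
    by (simp only: scaleC_of_real[symmetric] U_scaleC)
  show "norm (U x) \<le> norm x * 1" for x by (simp add: U_norm)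
qed

lemma Upow_pos: "Upow U (int k) = U ^^ k" by (simp add: Upow_def)
lemma Upow_neg: "Upow U (- int k) = inv U ^^ k" by (cases "k = 0") (simp_all add: Upow_def)

lemma orthU: "m \<noteq> n \<Longrightarrow> x \<in> W0 \<Longrightarrow> y \<in> W0 \<Longrightarrow> cinner (Upow U m x) (Upow U n y) = 0"
  using bs by (simp add: bilateral_shift_def)

lemma orth_pos: "j \<noteq> k \<Longrightarrow> x \<in> W0 \<Longrightarrow> y \<in> W0 \<Longrightarrow> cinner ((U^^j) x) ((U^^k) y) = 0"
  using orthU[of "int j" "int k" x y] by (simp add: Upow_pos)
lemma orth_neg: "j \<noteq> k \<Longrightarrow> x \<in> W0 \<Longrightarrow> y \<in> W0 \<Longrightarrow> cinner ((inv U^^j) x) ((inv U^^k) y) = 0"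
  using orthU[of "- int j" "- int k" x y] by (simp add: Upow_neg)
lemma Wp_pos: "k \<ge> 1 \<Longrightarrow> w \<in> W0 \<Longrightarrow> (U^^k) w \<in> orth_compl W0"
  using orth_pos[of 0 k _ w] by (auto simp: orth_compl_def)
lemma Wp_neg: "k \<ge> 1 \<Longrightarrow> w \<in> W0 \<Longrightarrow> (inv U^^k) w \<in> orth_compl W0"
  using orth_neg[of 0 k _ w] by (auto simp: orth_compl_def)
lemma norm_pos: "norm ((U^^k) w) = norm w"
  by (rule norm_eq_cinner) (rule pow_inner[OF U_inner])
lemma norm_neg: "norm ((inv U^^k) w) = norm w"
  by (rule norm_eq_cinner) (rule pow_inner[OF Ui_inner])

abbreviation "G \<equiv> phillips_graph U W0"

lemma defect_iff: "x \<in> defect G c \<longleftrightarrow>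
   (\<forall>g\<in>orth_compl W0. (- \<i> - cnj c) * cinner (U g) x + (- \<i> + cnj c) * cinner g x = 0)"
proof -
  have S: "{v - scaleC c u | u v. (u, v) \<in> G} = (\<lambda>g. scaleC \<i> (U g + g) - scaleC c (U g - g)) ` orth_compl W0"
    by (auto simp: phillips_graph_def)
  have e: "cinner (scaleC \<i> (U g + g) - scaleC c (U g - g)) x =
      (- \<i> - cnj c) * cinner (U g) x + (- \<i> + cnj c) * cinner g x" for g
    by (simp add: cinner_diff_left cinner_add_left cinner_scaleC_left algebra_simps)
  show ?thesis unfolding defect_def S orth_compl_image e ..
qed

lemma defect_mi: "x \<in> defect G (- \<i>) \<longleftrightarrow> (\<forall>g\<in>orth_compl W0. cinner (U g) x = 0)"
  by (simp add: defect_iff)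
lemma defect_i: "x \<in> defect G \<i> \<longleftrightarrow> (\<forall>g\<in>orth_compl W0. cinner g x = 0)"
  by (simp add: defect_iff)
lemma defect_mu: "x \<in> defect G (cnj \<mu>) \<longleftrightarrow>
   (\<forall>g\<in>orth_compl W0. (- \<i> - \<mu>) * cinner (U g) x + (- \<i> + \<mu>) * cinner g x = 0)"
  by (simp add: defect_iff)
lemma opdom: "op_dom G = {U g - g | g. g \<in> orth_compl W0}"
  by (auto simp: op_dom_def phillips_graph_def image_def)


lemma U1: "(U^^1) w = U w" by simp
lemma Ui1: "(inv U^^1) w = inv U w" by simp

lemma uniq:
  assumes g: "g \<in> orth_compl W0" and a: "a \<in> defect G (- \<i>)" and b: "b \<in> defect G \<i>"
    and s: "U g - g + a + b = 0"
  shows "a = 0 \<and> b = 0"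
proof -
  have aU: "cinner (U h) a = 0" if "h \<in> orth_compl W0" for h using a that by (simp add: defect_mi)
  have bh: "cinner h b = 0" if "h \<in> orth_compl W0" for h using b that by (simp add: defect_i)
  have gw: "cinner w g = 0" if "w \<in> W0" for w using g that by (simp add: orth_compl_def)
  have expand: "cinner z (U g) - cinner z g + cinner z a + cinner z b = 0" for z
  proof -
    have "cinner z (U g - g + a + b) = 0" using s by simp
    then show ?thesis by (simp only: cinner_add_right cinner_diff_right)
  qed
  have A: "cinner (U w) a = 0" if w: "w \<in> W0" for w
  proof -
    define c where "c k = cinner ((U^^k) w) g" for k
    have step: "c (Suc k) = c k" if k1: "k \<ge> 1" for k
    proof -
      have e1: "(U^^Suc k) w = U ((U^^k) w)" by simp
      have i1: "cinner ((U^^Suc k) w) (U g) = c k" unfolding e1 c_def by (rule U_inner)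
      have i2: "cinner ((U^^Suc k) w) a = 0" unfolding e1 by (rule aU[OF Wp_pos[OF k1 w]])
      have i3: "cinner ((U^^Suc k) w) b = 0" by (rule bh[OF Wp_pos[OF _ w]]) simp
      have "c k - c (Suc k) + 0 + 0 = 0" using expand[of "(U^^Suc k) w"] unfolding i1 i2 i3 c_def .
      then show ?thesis by simp
    qed
    have const: "c k = c 1" if "k \<ge> 1" for k
      using that
    proof (induction k)
      case 0 then show ?case by simp
    next
      case (Suc k) then show ?case by (cases "k = 0") (auto simp: step)
    qed
    have c1: "c 1 = 0"
    proof (rule bessel_zero[where e="\<lambda>k. (U^^Suc k) w" and r="norm w" and f=g])
      show "cinner ((U^^Suc j) w) ((U^^Suc k) w) = 0" if "j \<noteq> k" for j k
        by (rule orth_pos) (use that w in auto)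
      show "norm ((U^^Suc k) w) = norm w" for k by (rule norm_pos)
      show "cmod (c 1) \<le> cmod (cinner ((U^^Suc k) w) g)" for k
        using const[of "Suc k"] by (simp add: c_def)
    qed
    have j1: "cinner (U w) (U g) = 0" using gw[OF w] by (simp add: U_inner)
    have j2: "cinner (U w) g = 0" using c1 by (simp add: c_def)
    have j3: "cinner (U w) b = 0" using bh[OF Wp_pos[of 1 w]] w by simp
    show ?thesis using expand[of "U w"] unfolding j1 j2 j3 by simp
  qed
  have a0: "a = 0"
  proof -
    have "cinner w (inv U a) = 0" if "w \<in> W0" for w
      using A[OF that] by (metis U_inner U_inv1)
    then have "inv U a \<in> orth_compl W0" by (simp add: orth_compl_def)
    then have "cinner (U (inv U a)) a = 0" by (rule aU)
    then show ?thesis by (simp add: U_inv1 cinner_self_eq0)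
  qed
  have B: "cinner w b = 0" if w: "w \<in> W0" for w
  proof -
    define d where "d k = cinner ((inv U^^k) w) g" for k
    have step: "d (Suc k) = d k" if k1: "k \<ge> 1" for k
    proof -
      have e1: "(inv U^^k) w = U ((inv U^^Suc k) w)" by (simp add: U_inv1)
      have i1: "cinner ((inv U^^k) w) (U g) = d (Suc k)" unfolding d_def
        by (subst e1) (rule U_inner)
      have i2: "cinner ((inv U^^k) w) a = 0"
        by (subst e1) (rule aU[OF Wp_neg[OF _ w]], simp)
      have i3: "cinner ((inv U^^k) w) b = 0" by (rule bh[OF Wp_neg[OF k1 w]])
      have "d (Suc k) - d k + 0 + 0 = 0" using expand[of "(inv U^^k) w"] unfolding i1 i2 i3 d_def .
      then show ?thesis by simp
    qed
    have const: "d k = d 1" if "k \<ge> 1" for k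
      using that
    proof (induction k)
      case 0 then show ?case by simp
    next
      case (Suc k) then show ?case by (cases "k = 0") (auto simp: step)
    qed
    have d1: "d 1 = 0"
    proof (rule bessel_zero[where e="\<lambda>k. (inv U^^Suc k) w" and r="norm w" and f=g])
      show "cinner ((inv U^^Suc j) w) ((inv U^^Suc k) w) = 0" if "j \<noteq> k" for j k
        by (rule orth_neg) (use that w in auto)
      show "norm ((inv U^^Suc k) w) = norm w" for k by (rule norm_neg)
      show "cmod (d 1) \<le> cmod (cinner ((inv U^^Suc k) w) g)" for k
        using const[of "Suc k"] by (simp add: d_def)
    qed
    have iw: "inv U w \<in> orth_compl W0" using Wp_neg[of 1 w] w by simp
    have j1: "cinner w (U g) = 0"
    proof -
      have "cinner w (U g) = cinner (U (inv U w)) (U g)" by (simp only: U_inv1)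
      also have "\<dots> = cinner (inv U w) g" by (rule U_inner)
      also have "\<dots> = d 1" by (simp add: d_def)
      finally show ?thesis using d1 by simp
    qed
    have j2: "cinner w g = 0" by (rule gw[OF w])
    have j3: "cinner w a = 0"
    proof -
      have "cinner (U (inv U w)) a = 0" by (rule aU[OF iw])
      then show ?thesis by (simp only: U_inv1)
    qed
    show ?thesis using expand[of w] unfolding j1 j2 j3 by simp
  qed
  have b0: "b = 0"
  proof -
    have "b \<in> orth_compl W0" using B by (simp add: orth_compl_def)
    then have "cinner b b = 0" by (rule bh)
    then show ?thesis by (simp add: cinner_self_eq0)
  qed
  show ?thesis using a0 b0 by simp
qed

lemma perp:
  assumes mu: "Im \<mu> > 0" and f: "f \<in> defect G (cnj \<mu>)" and w: "w \<in> W0"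
  shows "cinner w f = 0"
proof -
  define d where "d k = cinner ((inv U^^k) w) f" for k
  have rel: "(\<mu> - \<i>) * d (Suc k) = (\<mu> + \<i>) * d k" for k
  proof -
    have h: "(inv U^^Suc k) w \<in> orth_compl W0" using Wp_neg[of "Suc k" w] w by simp
    have e1: "U ((inv U^^Suc k) w) = (inv U^^k) w" by (simp add: U_inv1)
    have "(- \<i> - \<mu>) * cinner (U ((inv U^^Suc k) w)) f + (- \<i> + \<mu>) * cinner ((inv U^^Suc k) w) f = 0"
      using f h unfolding defect_mu by blast
    then have "(- \<i> - \<mu>) * d k + (- \<i> + \<mu>) * d (Suc k) = 0" by (simp only: e1 d_def)
    then show ?thesis by (simp add: algebra_simps add_eq_0_iff)
  qed
  have pos: "cmod (\<mu> + \<i>) > 0"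
  proof -
    have "\<mu> + \<i> \<noteq> 0"
    proof
      assume "\<mu> + \<i> = 0"
      then have "Im (\<mu> + \<i>) = 0" by simp
      with mu show False by simp
    qed
    then show ?thesis by simp
  qed
  have mono: "cmod (d k) \<le> cmod (d (Suc k))" for k
  proof -
    have "cmod (\<mu> + \<i>) * cmod (d k) = cmod (\<mu> - \<i>) * cmod (d (Suc k))"
      using rel[of k] by (metis norm_mult)
    also have "\<dots> \<le> cmod (\<mu> + \<i>) * cmod (d (Suc k))"
      using cmod_mi_lt[OF mu] by (intro mult_right_mono) auto
    finally show ?thesis using pos by simp
  qed
  have m0: "cmod (d 0) \<le> cmod (d k)" for k
    by (induction k) (auto intro: order_trans[OF _ mono])
  have "d 0 = 0"
  proof (rule bessel_zero[where e="\<lambda>k. (inv U^^k) w" and r="norm w" and f=f])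
    show "cinner ((inv U^^j) w) ((inv U^^k) w) = 0" if "j \<noteq> k" for j k
      by (rule orth_neg) (use that w in auto)
    show "norm ((inv U^^k) w) = norm w" for k by (rule norm_neg)
    show "cmod (d 0) \<le> cmod (cinner ((inv U^^k) w) f)" for k
      using m0[of k] by (simp add: d_def)
  qed
  then show ?thesis by (simp add: d_def)
qed

lemma defect_diff: "x \<in> defect G c \<Longrightarrow> y \<in> defect G c \<Longrightarrow> x - y \<in> defect G c"
  unfolding defect_def by (rule orth_compl_diff)

lemma decomp_eq:
  assumes u: "u \<in> op_dom G" and fm: "fm \<in> defect G (- \<i>)" and fp: "fp \<in> defect G \<i>"
    and psi: "\<psi> = u + fm + fp"
  shows "decomp G \<psi> = (u, fm, fp)"
  unfolding decomp_def
proof (rule the_equality, goal_cases)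
  case 1 show ?case using assms by simp
next
  case (2 x)
  obtain u' fm' fp' where x: "x = (u', fm', fp')" by (cases x) auto
  from 2 x have u': "u' \<in> op_dom G" and fm': "fm' \<in> defect G (- \<i>)" and fp': "fp' \<in> defect G \<i>"
    and psi': "\<psi> = u' + fm' + fp'" by auto
  obtain g where g: "g \<in> orth_compl W0" "u = U g - g" using u by (auto simp: opdom)
  obtain g' where g': "g' \<in> orth_compl W0" "u' = U g' - g'" using u' by (auto simp: opdom)
  have "U (g' - g) - (g' - g) + (fm' - fm) + (fp' - fp) = 0"
    using psi psi' g g' by (simp add: U_diff algebra_simps)
  then have "fm' - fm = 0 \<and> fp' - fp = 0"
    by (rule uniq[OF orth_compl_diff[OF g'(1) g(1)] defect_diff[OF fm' fm] defect_diff[OF fp' fp]])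
  then have "fm' = fm" "fp' = fp" by auto
  with psi psi' have "u' = u" by simp
  with x \<open>fm' = fm\<close> \<open>fp' = fp\<close> show ?case by simp
qed

lemma inner_fm: "cinner (U h) (f - (U (scaleC l f) - scaleC l f)) = (1 + l) * cinner (U h) f - l * cinner h f"
  by (simp add: cinner_diff_right cinner_add_right U_scaleC cinner_scaleC_right U_inner algebra_simps)

lemma decomp_N:
  assumes mu: "Im \<mu> > 0" and f: "f \<in> defect G (cnj \<mu>)"
  shows "decomp G f = (U (scaleC (lamf \<mu>) f) - scaleC (lamf \<mu>) f,
                       f - (U (scaleC (lamf \<mu>) f) - scaleC (lamf \<mu>) f), 0)"
proof (rule decomp_eq)
  have fw: "cinner w f = 0" if "w \<in> W0" for w using perp[OF mu f that] .
  have "scaleC (lamf \<mu>) f \<in> orth_compl W0"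
    using fw by (simp add: orth_compl_def cinner_scaleC_right)
  then show "U (scaleC (lamf \<mu>) f) - scaleC (lamf \<mu>) f \<in> op_dom G"
    unfolding opdom by blast
  show "f - (U (scaleC (lamf \<mu>) f) - scaleC (lamf \<mu>) f) \<in> defect G (- \<i>)"
    unfolding defect_mi
  proof
    fix h assume h: "h \<in> orth_compl W0"
    have c: "(- \<i> - \<mu>) * cinner (U h) f + (- \<i> + \<mu>) * cinner h f = 0"
      using f h unfolding defect_mu by blast
    then have "(1 + lamf \<mu>) * cinner (U h) f - lamf \<mu> * cinner h f = 0"
      unfolding ident by simp
    then show "cinner (U h) (f - (U (scaleC (lamf \<mu>) f) - scaleC (lamf \<mu>) f)) = 0"
      by (simp only: inner_fm)
  qed
  show "0 \<in> defect G \<i>" by (simp add: defect_i)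
  show "f = U (scaleC (lamf \<mu>) f) - scaleC (lamf \<mu>) f +
      (f - (U (scaleC (lamf \<mu>) f) - scaleC (lamf \<mu>) f)) + 0" by simp
qed

lemma neumann:
  assumes z: "cmod \<zeta> < 1"
  shows "\<exists>f. f - scaleC \<zeta> (U f) = y"
proof -
  define t where "t n = scaleC (\<zeta>^n) ((U^^n) y)" for n
  have nt: "norm (t n) = cmod \<zeta> ^ n * norm y" for n
    by (simp add: t_def norm_scaleC norm_pos norm_power)
  have sn: "summable (\<lambda>n. norm (t n))" unfolding nt
    by (rule summable_mult2) (rule summable_geometric, simp add: z)
  have s: "summable t" using sn by (rule summable_norm_cancel)
  have sU: "summable (\<lambda>n. U (t n))" using bounded_linear.summable[OF U_bl s] .
  define f where "f = suminf t"
  have "scaleC \<zeta> (U f) = (\<Sum>n. scaleC \<zeta> (U (t n)))"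
    unfolding f_def bounded_linear.suminf[OF U_bl s] bounded_linear.suminf[OF bl_scaleC sU] ..
  also have "\<dots> = (\<Sum>n. t (Suc n))"
    by (simp add: t_def U_scaleC scaleC_scaleC)
  also have "\<dots> = f - t 0" unfolding f_def by (rule suminf_split_head[OF s])
  finally have "f - scaleC \<zeta> (U f) = t 0" by simp
  also have "t 0 = y" by (simp add: t_def scaleC_one)
  finally show ?thesis by blast
qed

lemma main:
  assumes Q: "unitary_between Q (defect G \<i>) (defect G (- \<i>))" and mu: "Im \<mu> > 0"
    and x: "x \<in> defect G (- \<i>)"
  shows "char_fun G Q \<mu> x = 0"
proof -
  have Q0: "Q 0 = 0"
  proof -
    have "(0::'a) \<in> defect G \<i>" by (simp add: defect_i)
    then have "Q (scaleC 0 0) = scaleC 0 (Q 0)"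
      using Q unfolding unitary_between_def clinear_on_def by blast
    then show ?thesis by simp
  qed
  define l where "l = lamf \<mu>"
  define fm where "fm f = f - (U (scaleC l f) - scaleC l f)" for f
  define P where "P y \<longleftrightarrow> (\<exists>f\<in>defect G (cnj \<mu>). x = Gamma1 G Q f + scaleC \<i> (Gamma0 G Q f)
      \<and> y = Gamma1 G Q f - scaleC \<i> (Gamma0 G Q f))" for y
  have G01: "Gamma1 G Q f + scaleC \<i> (Gamma0 G Q f) = scaleC \<i> (fm f) + scaleC \<i> (fm f)
      \<and> Gamma1 G Q f - scaleC \<i> (Gamma0 G Q f) = 0" if "f \<in> defect G (cnj \<mu>)" for f
    using decomp_N[OF mu that] by (simp add: Gamma0_def Gamma1_def Q0 fm_def l_def)
  have pos: "\<mu> + \<i> \<noteq> 0"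
  proof
    assume "\<mu> + \<i> = 0"
    then have "Im (\<mu> + \<i>) = 0" by simp
    with mu show False by simp
  qed
  have l1e: "1 + l = (\<mu> + \<i>) / (2 * \<i>)" by (simp add: l_def lamf_def field_simps)
  have l1: "1 + l \<noteq> 0" using pos unfolding l1e by simp
  define \<zeta> where "\<zeta> = l / (1 + l)"
  have zeq: "\<zeta> = (\<mu> - \<i>) / (\<mu> + \<i>)" unfolding \<zeta>_def l1e using pos by (simp add: l_def lamf_def)
  have zl: "cmod \<zeta> < 1" unfolding zeq using cmod_mi_lt[OF mu] pos by (simp add: norm_divide)
  define y0 where "y0 = scaleC (1 / (2 * \<i>)) x"
  have y0x: "scaleC \<i> y0 + scaleC \<i> y0 = x"
  proof -
    have "scaleC \<i> y0 + scaleC \<i> y0 = scaleC (\<i> * (1 / (2 * \<i>)) + \<i> * (1 / (2 * \<i>))) x"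
      by (simp only: y0_def scaleC_scaleC scaleC_add_left)
    also have "\<i> * (1 / (2 * \<i>)) + \<i> * (1 / (2 * \<i>)) = 1" by simp
    finally show ?thesis by (simp only: scaleC_one)
  qed
  have y0N: "cinner (U h) y0 = 0" if "h \<in> orth_compl W0" for h
    using x that by (simp add: defect_mi y0_def cinner_scaleC_right)
  obtain f where f: "f - scaleC \<zeta> (U f) = scaleC (1 / (1 + l)) y0" using neumann[OF zl] by blast
  have fmf: "fm f = y0"
  proof -
    have "fm f = scaleC (1 + l) f - scaleC l (U f)"
      by (simp add: fm_def U_scaleC scaleC_add_left scaleC_one algebra_simps)
    also have "\<dots> = scaleC (1 + l) (f - scaleC \<zeta> (U f))"
      using l1 by (simp add: scaleC_diff_right scaleC_scaleC \<zeta>_def)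
    also have "\<dots> = y0" using l1 by (simp add: f scaleC_scaleC scaleC_one)
    finally show ?thesis .
  qed
  have fN: "f \<in> defect G (cnj \<mu>)"
    unfolding defect_mu
  proof
    fix h assume h: "h \<in> orth_compl W0"
    have "(1 + l) * cinner (U h) f - l * cinner h f = 0"
      using y0N[OF h] unfolding fmf[symmetric] fm_def inner_fm .
    then show "(- \<i> - \<mu>) * cinner (U h) f + (- \<i> + \<mu>) * cinner h f = 0"
      unfolding ident l_def by simp
  qed
  have e1: "x = Gamma1 G Q f + scaleC \<i> (Gamma0 G Q f)" using G01[OF fN] fmf y0x by metis
  have e2: "0 = Gamma1 G Q f - scaleC \<i> (Gamma0 G Q f)" using G01[OF fN] by metis
  have ex: "P 0" unfolding P_def using fN e1 e2 by blast
  have all: "y = 0" if "P y" for y using that G01 unfolding P_def by auto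
  have "char_fun G Q \<mu> x = (SOME y. P y)" unfolding char_fun_def P_def ..
  also have "\<dots> = 0" using someI[of P 0, OF ex] all by blast
  finally show ?thesis .
qed
end


theorem lemma3p1:
  fixes U :: "'a::chilbert \<Rightarrow> 'a" and W0 :: "'a set" and Q :: "'a \<Rightarrow> 'a"
  assumes "bilateral_shift U W0"
    and "unitary_between Q (defect (phillips_graph U W0) \<i>) (defect (phillips_graph U W0) (- \<i>))"
  shows "\<forall>\<mu>. Im \<mu> > 0 \<longrightarrow>
           (\<forall>x \<in> defect (phillips_graph U W0) (- \<i>). char_fun (phillips_graph U W0) Q \<mu> x = 0)"
proof -
  interpret phil U W0 using assms(1) by unfold_locales
  show ?thesis using main[OF assms(2)] by blast
qed

end
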